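(* Let $(X,d)$ be a quasi-tree which is $\delta$-hyperbolic and has bottleneck constant $\Delta\geqslant 0$. Let $x_0\in X$, let $Z\subset X$ be any subset, and let $Y=\bigcup_{z\in Z}[x_0,z]$ be a union of geodesic segments (one chosen geodesic from $x_0$ to each $z\in Z$). Then there exist an $\mathbb{R}$-tree $(T,d^* )$ and a map $f:Y\to T$ such that: (1) for all $z\in Z$, the restriction of $f$ to the geodesic segment $[x_0,z]$ is an isometry; (2) for all $x,y\in Y$, $d(x,y)-2(\Delta+2\delta)\leqslant d^*(f(x),f(y))\leqslant d(x,y)$.
   Context: A quasi-tree is a geodesic metric space quasi-isometric to a simplicial tree. A geodesic metric space is $\delta$-hyperbolic if every geodesic triangle is $\delta$-slim: each point of one side lies within distance $\delta$ of the union of the other two sides. A bottleneck constant of $X$ is a number $\Delta\geqslant0$ such that for every geodesic $[x,y]$ in $X$ and every point $z\in[x,y]$, every path from $x$ to $y$ meets the closed ball $B(z,\Delta)$ (for a quasi-tree such $\Delta$ exists). An $\mathbb{R}$-tree is a metric space in which any two points are joined by a unique topological arc, which is a geodesic. *)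

theory Defs
  imports "HOL-Analysis.Analysis"
begin

definition geodesic_seg :: "'a set \<Rightarrow> ('a \<Rightarrow> 'a \<Rightarrow> real) \<Rightarrow> 'a set \<Rightarrow> 'a \<Rightarrow> 'a \<Rightarrow> bool" where
  "geodesic_seg M d S x y \<longleftrightarrow>
     (\<exists>g. g 0 = x \<and> g (d x y) = y \<and> g ` {0..d x y} \<subseteq> M \<and>
          (\<forall>s\<in>{0..d x y}. \<forall>t\<in>{0..d x y}. d (g s) (g t) = \<bar>s - t\<bar>) \<and>
          S = g ` {0..d x y})"

abbreviation geodesic_segment :: "'a::metric_space set \<Rightarrow> 'a \<Rightarrow> 'a \<Rightarrow> bool" where
  "geodesic_segment S x y \<equiv> geodesic_seg UNIV dist S x y"

definition geodesic_space :: "'a::metric_space itself \<Rightarrow> bool" where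
  "geodesic_space _ \<longleftrightarrow> (\<forall>x y::'a. \<exists>S. geodesic_segment S x y)"

definition hyperbolic :: "real \<Rightarrow> 'a::metric_space itself \<Rightarrow> bool" where
  "hyperbolic \<delta> _ \<longleftrightarrow>
     (\<forall>x y z::'a. \<forall>A B C. geodesic_segment A x y \<and> geodesic_segment B y z \<and> geodesic_segment C x z
        \<longrightarrow> (\<forall>p\<in>A. infdist p (B \<union> C) \<le> \<delta>))"

definition bottleneck_constant :: "real \<Rightarrow> 'a::metric_space itself \<Rightarrow> bool" where
  "bottleneck_constant \<Delta> _ \<longleftrightarrow> \<Delta> \<ge> 0 \<and>
     (\<forall>x y::'a. \<forall>S z. geodesic_segment S x y \<and> z \<in> S \<longrightarrow>
        (\<forall>p. path p \<and> pathstart p = x \<and> pathfinish p = y \<longrightarrow> (\<exists>t\<in>{0..1}. p t \<in> cball z \<Delta>)))"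

definition walk :: "'v set \<Rightarrow> ('v \<Rightarrow> 'v \<Rightarrow> bool) \<Rightarrow> 'v list \<Rightarrow> bool" where
  "walk V E p \<longleftrightarrow> p \<noteq> [] \<and> set p \<subseteq> V \<and> (\<forall>i. Suc i < length p \<longrightarrow> E (p ! i) (p ! Suc i))"

definition simplicial_tree :: "'v set \<Rightarrow> ('v \<Rightarrow> 'v \<Rightarrow> bool) \<Rightarrow> bool" where
  "simplicial_tree V E \<longleftrightarrow> V \<noteq> {} \<and>
     (\<forall>u v. E u v \<longrightarrow> u \<in> V \<and> v \<in> V \<and> E v u \<and> u \<noteq> v) \<and>
     (\<forall>u\<in>V. \<forall>v\<in>V. \<exists>!p. walk V E p \<and> distinct p \<and> hd p = u \<and> last p = v)"

definition graph_dist :: "'v set \<Rightarrow> ('v \<Rightarrow> 'v \<Rightarrow> bool) \<Rightarrow> 'v \<Rightarrow> 'v \<Rightarrow> real" where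
  "graph_dist V E u v = real (LEAST n. \<exists>p. walk V E p \<and> hd p = u \<and> last p = v \<and> length p = Suc n)"

text \<open>f is a quasi-isometry from the metric space 'a onto the vertex set of the tree
  (with the graph metric; this is quasi-isometric to its geometric realisation).\<close>
definition quasi_isometry_to_tree :: "('a::metric_space \<Rightarrow> 'v) \<Rightarrow> 'v set \<Rightarrow> ('v \<Rightarrow> 'v \<Rightarrow> bool) \<Rightarrow> bool" where
  "quasi_isometry_to_tree f V E \<longleftrightarrow> simplicial_tree V E \<and> range f \<subseteq> V \<and>
     (\<exists>L c. L \<ge> 1 \<and> c \<ge> 0 \<and>
        (\<forall>x y. dist x y / L - c \<le> graph_dist V E (f x) (f y) \<and>
               graph_dist V E (f x) (f y) \<le> L * dist x y + c) \<and>
        (\<forall>v\<in>V. \<exists>x. graph_dist V E v (f x) \<le> c))"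

definition R_tree :: "'b set \<Rightarrow> ('b \<Rightarrow> 'b \<Rightarrow> real) \<Rightarrow> bool" where
  "R_tree T d \<longleftrightarrow> Metric_space T d \<and>
     (\<forall>x\<in>T. \<forall>y\<in>T. x \<noteq> y \<longrightarrow>
        (\<exists>!A. \<exists>g. pathin (Metric_space.mtopology T d) g \<and> inj_on g {0..1} \<and>
                   g 0 = x \<and> g 1 = y \<and> A = g ` {0..1}) \<and>
        (\<forall>A. (\<exists>g. pathin (Metric_space.mtopology T d) g \<and> inj_on g {0..1} \<and>
                   g 0 = x \<and> g 1 = y \<and> A = g ` {0..1}) \<longrightarrow> geodesic_seg T d A x y))"

end

theory Submission
  imports Defs
begin


lemma iso_cont:
  assumes "\<forall>s\<in>{0..D}. \<forall>t\<in>{0..D}. dist (g s) (g t) = \<bar>s - t\<bar>"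
  shows "continuous_on {0..D} (g :: real \<Rightarrow> 'a::metric_space)"
  unfolding continuous_on_iff
proof (intro ballI allI impI)
  fix x e assume "x \<in> {0..D}" "(0::real) < e"
  then show "\<exists>d>0. \<forall>x'\<in>{0..D}. dist x' x < d \<longrightarrow> dist (g x') (g x) < e"
    using assms by (intro exI[of _ e]) (auto simp: dist_real_def)
qed

lemma iso_path:
  assumes "\<forall>s\<in>{0..D}. \<forall>t\<in>{0..D}. dist (g s) (g t) = \<bar>s - t\<bar>" "D \<ge> 0"
  shows "path (\<lambda>t. (g :: real \<Rightarrow> 'a::metric_space) (D*t))"
proof -
  have "continuous_on {0..1} (g \<circ> (\<lambda>t. D*t))"
  proof (rule continuous_on_compose)
    show "continuous_on {0..1} ((*) D)" by (intro continuous_intros)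
    have "(*) D ` {0..1} \<subseteq> {0..D}" using assms(2) by (auto simp: mult_left_le)
    then show "continuous_on ((*) D ` {0..1}) g"
      using iso_cont[OF assms(1)] continuous_on_subset by blast
  qed
  then show ?thesis by (simp add: path_def o_def)
qed

definition Pth :: "'a::metric_space \<Rightarrow> real \<Rightarrow> 'a \<Rightarrow> 'a \<Rightarrow> bool" where
  "Pth x0 s u v \<longleftrightarrow> (\<exists>p. path p \<and> pathstart p = u \<and> pathfinish p = v \<and> (\<forall>q\<in>path_image p. s \<le> dist x0 q))"

definition mm :: "'a::metric_space \<Rightarrow> 'a \<Rightarrow> 'a \<Rightarrow> real" where
  "mm x0 u v = Sup {s. Pth x0 s u v}"

lemma Pth_gp:
  assumes geod: "geodesic_space TYPE('a)"
  shows "Pth x0 ((dist x0 u + dist x0 v - dist u v)/2) (u::'a::metric_space) v"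
proof -
  obtain S where "geodesic_segment S u v" using geod unfolding geodesic_space_def by blast
  then obtain g where g: "g 0 = u" "g (dist u v) = v"
     "\<forall>s\<in>{0..dist u v}. \<forall>t\<in>{0..dist u v}. dist (g s) (g t) = \<bar>s - t\<bar>"
    unfolding geodesic_seg_def by blast
  let ?D = "dist u v"
  have p: "path (\<lambda>t. g (?D*t))" by (rule iso_path[OF g(3)]) simp
  show ?thesis unfolding Pth_def
  proof (intro exI conjI ballI)
    show "path (\<lambda>t. g (?D*t))" by fact
    show "pathstart (\<lambda>t. g (?D*t)) = u" using g by (simp add: pathstart_def)
    show "pathfinish (\<lambda>t. g (?D*t)) = v" using g by (simp add: pathfinish_def)
    fix q assume "q \<in> path_image (\<lambda>t. g (?D*t))"
    then obtain t where t: "t \<in> {0..1}" "q = g (?D*t)" by (auto simp: path_image_def)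
    have r: "?D*t \<in> {0..?D}" using t by (auto simp: mult_left_le)
    have "dist u q = ?D*t" using g(3) r g(1) t(2) using t by (smt (verit) atLeastAtMost_iff zero_le_dist mult_nonneg_nonneg)
    moreover have "dist q v = ?D - ?D*t" using g(3) r g(2) t(2) by (smt (verit) atLeastAtMost_iff zero_le_dist)
    moreover have "dist x0 u \<le> dist x0 q + dist q u" "dist x0 v \<le> dist x0 q + dist q v" by (simp_all add: dist_triangle)
    ultimately show "(dist x0 u + dist x0 v - dist u v)/2 \<le> dist x0 q" by (simp add: dist_commute)
  qed
qed


lemma seg_on:
  assumes "geodesic_segment S a b" "q \<in> S"
  shows "dist a q + dist q b = dist a (b::'a::metric_space)"
proof -
  obtain g where g: "g 0 = a" "g (dist a b) = b"
     "\<forall>s\<in>{0..dist a b}. \<forall>t\<in>{0..dist a b}. dist (g s) (g t) = \<bar>s - t\<bar>" "S = g ` {0..dist a b}"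
    using assms(1) unfolding geodesic_seg_def by blast
  then obtain r where r: "r \<in> {0..dist a b}" "q = g r" using assms(2) by auto
  have "dist a q = r" using g(3) r g(1) by (smt (verit) atLeastAtMost_iff zero_le_dist)
  moreover have "dist q b = dist a b - r" using g(3) r g(2) by (smt (verit) atLeastAtMost_iff zero_le_dist)
  ultimately show ?thesis by simp
qed

lemma seg_start: "geodesic_segment S a b \<Longrightarrow> a \<in> S"
  unfolding geodesic_seg_def by force

lemma seg_infdist:
  assumes "geodesic_segment S1 u x0"
  shows "dist x0 c + dist u c - dist x0 (u::'a::metric_space) \<le> 2 * infdist c S1"
proof -
  have ne: "S1 \<noteq> {}" using seg_start[OF assms] by auto
  have "(dist x0 c + dist u c - dist x0 u)/2 \<le> infdist c S1"
    unfolding infdist_notempty[OF ne]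
  proof (rule cINF_greatest[OF ne])
    fix c' assume "c' \<in> S1"
    from seg_on[OF assms this] have e: "dist u c' + dist c' x0 = dist u x0" .
    have "dist x0 c \<le> dist x0 c' + dist c' c" "dist u c \<le> dist u c' + dist c' c" by (simp_all add: dist_triangle)
    then show "(dist x0 c + dist u c - dist x0 u)/2 \<le> dist c c'" using e by (simp add: dist_commute)
  qed
  then show ?thesis by simp
qed

lemma Pth_bound:
  assumes geod: "geodesic_space TYPE('a)"
    and hyp: "hyperbolic \<delta> TYPE('a)"
    and bneck: "bottleneck_constant \<Delta> TYPE('a)"
    and P: "Pth x0 s u (v::'a::metric_space)"
  shows "2 * s \<le> dist x0 u + dist x0 v - dist u v + 2 * \<Delta> + 4*\<delta>"
proof -
  obtain S where S: "geodesic_segment S u v" using geod unfolding geodesic_space_def by blast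
  then obtain g where g: "g 0 = u" "g (dist u v) = v"
     "\<forall>s\<in>{0..dist u v}. \<forall>t\<in>{0..dist u v}. dist (g s) (g t) = \<bar>s - t\<bar>" "S = g ` {0..dist u v}"
    unfolding geodesic_seg_def by blast
  obtain S1 where S1: "geodesic_segment S1 u x0" using geod unfolding geodesic_space_def by blast
  obtain S2 where S2: "geodesic_segment S2 v x0" using geod unfolding geodesic_space_def by blast
  have sl: "\<forall>p\<in>S. infdist p (S2 \<union> S1) \<le> \<delta>"
    using hyp S S1 S2 unfolding hyperbolic_def by blast
  have ne1: "S1 \<noteq> {}" using seg_start[OF S1] by auto
  have ne2: "S2 \<noteq> {}" using seg_start[OF S2] by auto
  let ?phi = "\<lambda>r. infdist (g r) S1 - infdist (g r) S2"
  have cont: "continuous_on {0..dist u v} ?phi"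
    using iso_cont[OF g(3)] by (intro continuous_intros)
  have "?phi 0 \<le> 0" using g(1) seg_start[OF S1] by (simp add: infdist_nonneg)
  moreover have "0 \<le> ?phi (dist u v)" using g(2) seg_start[OF S2] by (simp add: infdist_nonneg)
  ultimately obtain r where r: "0 \<le> r" "r \<le> dist u v" "?phi r = 0"
    using IVT'[of ?phi 0 0 "dist u v", OF _ _ _ cont] by auto
  define c where "c = g r"
  have cS: "c \<in> S" using r g(4) c_def by auto
  have "min (infdist c S2) (infdist c S1) \<le> \<delta>"
    using sl cS infdist_Un_min[OF ne2 ne1] by metis
  then have i1: "infdist c S1 \<le> \<delta>" and i2: "infdist c S2 \<le> \<delta>" using r(3) c_def by auto
  have b1: "dist x0 c + dist u c - dist x0 u \<le> 2*\<delta>" using seg_infdist[OF S1, of c] i1 by simp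
  have b2: "dist x0 c + dist v c - dist x0 v \<le> 2*\<delta>" using seg_infdist[OF S2, of c] i2 by simp
  have on: "dist u c + dist c v = dist u v" by (rule seg_on[OF S cS])
  have cb: "2 * dist x0 c \<le> (dist x0 u + dist x0 v - dist u v) + 4*\<delta>"
    using b1 b2 on dist_commute[of v c] by linarith
  obtain p where p: "path p" "pathstart p = u" "pathfinish p = v" "\<forall>q\<in>path_image p. s \<le> dist x0 q"
    using P unfolding Pth_def by blast
  obtain t where t: "t \<in> {0..1}" "p t \<in> cball c \<Delta>"
    using bneck S cS p unfolding bottleneck_constant_def by blast
  have "s \<le> dist x0 (p t)" using p(4) t(1) by (auto simp: path_image_def)
  also have "\<dots> \<le> dist x0 c + dist c (p t)" by (rule dist_triangle)
  also have "\<dots> \<le> dist x0 c + \<Delta>" using t(2) by simp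
  finally show ?thesis using cb by simp
qed


lemma Pth_le1: "Pth x0 s u v \<Longrightarrow> s \<le> dist x0 u"
  unfolding Pth_def by (metis pathstart_in_path_image)

lemma Pth_le2: "Pth x0 s u v \<Longrightarrow> s \<le> dist x0 v"
  unfolding Pth_def by (metis pathfinish_in_path_image)

lemma Pth_mono: "Pth x0 s u v \<Longrightarrow> s' \<le> s \<Longrightarrow> Pth x0 s' u v"
  unfolding Pth_def by (blast intro: order_trans)

lemma Pth_sym: "Pth x0 s u v \<Longrightarrow> Pth x0 s v u"
  unfolding Pth_def by (metis path_image_reversepath path_reversepath pathfinish_reversepath pathstart_reversepath)

lemma Pth_trans: "Pth x0 s u v \<Longrightarrow> Pth x0 s v w \<Longrightarrow> Pth x0 s u w"
  unfolding Pth_def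
proof (elim exE conjE)
  fix p q assume p: "path p" "pathstart p = u" "pathfinish p = v" "\<forall>x\<in>path_image p. s \<le> dist x0 x"
    and q: "path q" "pathstart q = v" "pathfinish q = w" "\<forall>x\<in>path_image q. s \<le> dist x0 x"
  show "\<exists>p. path p \<and> pathstart p = u \<and> pathfinish p = w \<and> (\<forall>q\<in>path_image p. s \<le> dist x0 q)"
    using p q path_image_join_subset[of p q] by (intro exI[of _ "p +++ q"]) auto
qed

lemma mm_props:
  assumes geod: "geodesic_space TYPE('a)"
  shows "bdd_above {s. Pth x0 s u (v::'a::metric_space)}" "{s. Pth x0 s u v} \<noteq> {}"
    and "(dist x0 u + dist x0 v - dist u v)/2 \<le> mm x0 u v"
    and "mm x0 u v \<le> dist x0 u" "mm x0 u v \<le> dist x0 v"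
proof -
  show b: "bdd_above {s. Pth x0 s u v}" using Pth_le1 by (intro bdd_aboveI) blast
  show n: "{s. Pth x0 s u v} \<noteq> {}" using Pth_gp[OF geod] by blast
  show "(dist x0 u + dist x0 v - dist u v)/2 \<le> mm x0 u v"
    unfolding mm_def using Pth_gp[OF geod] b by (intro cSup_upper) auto
  show "mm x0 u v \<le> dist x0 u" unfolding mm_def using n Pth_le1 by (intro cSup_least) auto
  show "mm x0 u v \<le> dist x0 v" unfolding mm_def using n Pth_le2 by (intro cSup_least) auto
qed

lemma mm_bound:
  assumes geod: "geodesic_space TYPE('a)"
    and hyp: "hyperbolic \<delta> TYPE('a)"
    and bneck: "bottleneck_constant \<Delta> TYPE('a)"
  shows "2 * mm x0 u (v::'a::metric_space) \<le> dist x0 u + dist x0 v - dist u v + 2 * \<Delta> + 4*\<delta>"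
proof -
  define K where "K = dist x0 u + dist x0 v - dist u v + 2 * \<Delta> + 4*\<delta>"
  have "mm x0 u v \<le> K/2"
    unfolding mm_def
  proof (rule cSup_least)
    show "{s. Pth x0 s u v} \<noteq> {}" using mm_props(2)[OF geod] .
    fix x assume "x \<in> {s. Pth x0 s u v}"
    then have "2*x \<le> K" using Pth_bound[OF geod hyp bneck, of x0 x u v] by (simp add: K_def)
    then show "x \<le> K/2" by linarith
  qed
  then have "2 * mm x0 u v \<le> K" by linarith
  then show ?thesis unfolding K_def .
qed

lemma mm_sym: "mm x0 u v = mm x0 v u"
  unfolding mm_def using Pth_sym by metis

lemma mm_ultra:
  assumes geod: "geodesic_space TYPE('a)"
  shows "min (mm x0 u v) (mm x0 v w) \<le> mm x0 u (w::'a::metric_space)"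
proof (rule dense_le)
  fix s assume s: "s < min (mm x0 u v) (mm x0 v w)"
  have "\<exists>a\<in>{s. Pth x0 s u v}. s < a"
    using s mm_props(1,2)[OF geod, of x0 u v] unfolding mm_def by (simp add: less_cSup_iff)
  then have 1: "Pth x0 s u v" using Pth_mono by force
  have "\<exists>a\<in>{s. Pth x0 s v w}. s < a"
    using s mm_props(1,2)[OF geod, of x0 v w] unfolding mm_def by (simp add: less_cSup_iff)
  then have 2: "Pth x0 s v w" using Pth_mono by force
  have "Pth x0 s u w" by (rule Pth_trans[OF 1 2])
  then show "s \<le> mm x0 u w" unfolding mm_def using mm_props(1)[OF geod, of x0 u w]
    by (intro cSup_upper) auto
qed


lemma mm_ge2:
  assumes geod: "geodesic_space TYPE('a)"
  shows "dist x0 u + dist x0 v - dist u v \<le> 2 * mm x0 u (v::'a::metric_space)"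
proof -
  define K where "K = dist x0 u + dist x0 v - dist u v"
  have "K/2 \<le> mm x0 u v" using mm_props(3)[OF geod, of x0 u v] unfolding K_def .
  then have "K \<le> 2 * mm x0 u v" by linarith
  then show ?thesis unfolding K_def .
qed

lemma seg_param:
  assumes "geodesic_segment S x0 z"
  obtains \<gamma> where "\<gamma> 0 = x0" "\<gamma> (dist x0 z) = z"
    "\<forall>s\<in>{0..dist x0 z}. \<forall>t\<in>{0..dist x0 z}. dist (\<gamma> s) (\<gamma> t) = \<bar>s - t\<bar>"
    "S = \<gamma> ` {0..dist x0 z}" "\<forall>s\<in>{0..dist x0 z}. dist x0 (\<gamma> s) = s"
proof -
  obtain \<gamma> where g: "\<gamma> 0 = x0" "\<gamma> (dist x0 z) = z"
    "\<forall>s\<in>{0..dist x0 z}. \<forall>t\<in>{0..dist x0 z}. dist (\<gamma> s) (\<gamma> t) = \<bar>s - t\<bar>"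
    "S = \<gamma> ` {0..dist x0 z}"
    using assms unfolding geodesic_seg_def by blast
  have "\<forall>s\<in>{0..dist x0 z}. dist x0 (\<gamma> s) = s"
  proof
    fix s assume s: "s \<in> {0..dist x0 z}"
    have "(0::real) \<in> {0..dist x0 z}" by simp
    then have "dist (\<gamma> 0) (\<gamma> s) = \<bar>0 - s\<bar>" using g(3) s by blast
    then show "dist x0 (\<gamma> s) = s" using g(1) s by simp
  qed
  then show ?thesis using that g by blast
qed



lemma locconst:
  fixes P :: "real \<Rightarrow> bool"
  assumes ab: "a \<le> b"
    and lc: "\<forall>t\<in>{a..b}. \<exists>\<eta>>0. \<forall>s\<in>{a..b}. \<bar>s - t\<bar> < \<eta> \<longrightarrow> (P s \<longleftrightarrow> P t)"
  shows "P a \<longleftrightarrow> P b"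
proof -
  obtain eta where eta: "\<forall>t\<in>{a..b}. eta t > 0 \<and> (\<forall>s\<in>{a..b}. \<bar>s - t\<bar> < eta t \<longrightarrow> (P s \<longleftrightarrow> P t))"
    using bchoice[OF lc] by blast
  define U where "U = (\<Union>t\<in>{t\<in>{a..b}. P t}. ball t (eta t))"
  define V where "V = (\<Union>t\<in>{t\<in>{a..b}. \<not> P t}. ball t (eta t))"
  have oU: "open U" and oV: "open V" unfolding U_def V_def by (simp_all add: open_UN)
  have Ui: "P s" if sU: "s \<in> U" and sab: "s \<in> {a..b}" for s
  proof -
    obtain t1 where t1: "t1 \<in> {a..b}" "P t1" "dist t1 s < eta t1" using sU unfolding U_def by auto
    then have "\<bar>s - t1\<bar> < eta t1" by (simp add: dist_real_def abs_minus_commute)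
    then show "P s" using eta t1 sab by blast
  qed
  have Vi: "\<not> P s" if sU: "s \<in> V" and sab: "s \<in> {a..b}" for s
  proof -
    obtain t1 where t1: "t1 \<in> {a..b}" "\<not> P t1" "dist t1 s < eta t1" using sU unfolding V_def by auto
    then have "\<bar>s - t1\<bar> < eta t1" by (simp add: dist_real_def abs_minus_commute)
    then show "\<not> P s" using eta t1 sab by blast
  qed
  have disj: "U \<inter> V \<inter> {a..b} = {}" using Ui Vi by blast
  have cov: "{a..b} \<subseteq> U \<union> V"
  proof
    fix s assume s: "s \<in> {a..b}"
    then have "s \<in> ball s (eta s)" using eta by auto
    then show "s \<in> U \<union> V" unfolding U_def V_def using s by (cases "P s") auto
  qed
  have "U \<inter> {a..b} = {} \<or> V \<inter> {a..b} = {}"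
    by (rule connectedD[OF connected_Icc oU oV disj cov])
  moreover have "a \<in> {a..b}" "b \<in> {a..b}" using ab by auto
  ultimately show ?thesis using cov Ui Vi by blast
qed

lemma pathin_metric:
  assumes MS: "Metric_space T d" and p: "pathin (Metric_space.mtopology T d) g"
  shows "\<forall>t\<in>{0..1}. g t \<in> T"
    and "\<forall>t\<in>{0..1}. \<forall>e>0. \<exists>\<eta>>0. \<forall>s\<in>{0..1}. \<bar>s - t\<bar> < \<eta> \<longrightarrow> d (g t) (g s) < e"
proof -
  have c: "continuous_map (top_of_set {0..1}) (Metric_space.mtopology T d) g"
    using p unfolding pathin_def by simp
  show "\<forall>t\<in>{0..1}. g t \<in> T"
    using continuous_map_image_subset_topspace[OF c] Metric_space.topspace_mtopology[OF MS] by auto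
  show "\<forall>t\<in>{0..1}. \<forall>e>0. \<exists>\<eta>>0. \<forall>s\<in>{0..1}. \<bar>s - t\<bar> < \<eta> \<longrightarrow> d (g t) (g s) < e"
  proof (intro ballI allI impI)
    fix t e assume t: "t \<in> {0..1::real}" and e: "(0::real) < e"
    obtain U where U: "openin (top_of_set {0..1}) U" "t \<in> U" "\<forall>y\<in>U. g y \<in> Metric_space.mball T d (g t) e"
    proof -
      have "\<forall>x\<in>{0..1}. \<forall>\<epsilon>>0. \<exists>U. openin (top_of_set {0..1}) U \<and> x \<in> U \<and> (\<forall>y\<in>U. g y \<in> Metric_space.mball T d (g x) \<epsilon>)"
        using c unfolding Metric_space.continuous_map_to_metric[OF MS] by simp
      then show ?thesis using t e that by blast
    qed
    obtain W where W: "open W" "U = {0..1} \<inter> W" using U(1) openin_open by metis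
    obtain \<eta> where eta: "\<eta> > 0" "ball t \<eta> \<subseteq> W" using W U(2) open_contains_ball by blast
    show "\<exists>\<eta>>0. \<forall>s\<in>{0..1}. \<bar>s - t\<bar> < \<eta> \<longrightarrow> d (g t) (g s) < e"
    proof (intro exI conjI ballI impI)
      show "\<eta> > 0" by fact
      fix s assume "s \<in> {0..1::real}" "\<bar>s - t\<bar> < \<eta>"
      then have "s \<in> U" using W eta by (auto simp: dist_real_def abs_minus_commute)
      then show "d (g t) (g s) < e" using U(3) Metric_space.in_mball[OF MS] by blast
    qed
  qed
qed

definition fourpt :: "'b set \<Rightarrow> ('b \<Rightarrow> 'b \<Rightarrow> real) \<Rightarrow> bool" where
  "fourpt T d \<longleftrightarrow> (\<forall>x\<in>T. \<forall>y\<in>T. \<forall>z\<in>T. \<forall>w\<in>T. d x y + d z w \<le> max (d x z + d y w) (d x w + d y z))"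

lemma passes:
  fixes g :: "real \<Rightarrow> 'b" and a b :: real
  assumes MS: "Metric_space T d" and fp: "fourpt T d" and ab: "a \<le> b"
    and gT: "\<forall>t\<in>{a..b}. g t \<in> T"
    and gc: "\<forall>t\<in>{a..b}. \<forall>e>0. \<exists>\<eta>>0. \<forall>s\<in>{a..b}. \<bar>s - t\<bar> < \<eta> \<longrightarrow> d (g t) (g s) < e"
    and gx: "g a = x" and gy: "g b = y" and pT: "p \<in> T" and pI: "d x p + d p y = d x y"
  shows "\<exists>t\<in>{a..b}. g t = p"
proof (rule ccontr)
  assume np: "\<not> (\<exists>t\<in>{a..b}. g t = p)"
  have "a \<in> {a..b}" "b \<in> {a..b}" using ab by auto
  then have xT: "x \<in> T" and yT: "y \<in> T" using gT gx gy by auto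
  have xp: "x \<noteq> p" using np gx ab by auto
  have yp: "y \<noteq> p" using np gy ab by auto
  interpret M: Metric_space T d by (rule MS)
  define F where "F u = d p u + d p x - d u x" for u
  have "(0 < F (g a)) \<longleftrightarrow> (0 < F (g b))"
  proof (rule locconst[OF ab], intro ballI)
    fix t assume t: "t \<in> {a..b}"
    define u where "u = g t"
    have uT: "u \<in> T" using gT t u_def by auto
    have up: "u \<noteq> p" using np t u_def by auto
    have tri: "\<And>a b c. a \<in> T \<Longrightarrow> b \<in> T \<Longrightarrow> c \<in> T \<Longrightarrow> d a c \<le> d a b + d b c" using M.triangle by blast
    show "\<exists>\<eta>>0. \<forall>s\<in>{a..b}. \<bar>s - t\<bar> < \<eta> \<longrightarrow> (0 < F (g s)) = (0 < F (g t))"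
    proof (cases "0 < F u")
      case True
      obtain \<eta> where eta: "\<eta> > 0" "\<forall>s\<in>{a..b}. \<bar>s - t\<bar> < \<eta> \<longrightarrow> d u (g s) < F u / 2"
      proof -
        have "F u / 2 > 0" using True by simp
        then show ?thesis using gc t u_def that by blast
      qed
      show ?thesis
      proof (intro exI conjI ballI impI)
        show "\<eta> > 0" by fact
        fix s assume s: "s \<in> {a..b}" "\<bar>s - t\<bar> < \<eta>"
        define v where "v = g s"
        have vT: "v \<in> T" using gT s v_def by auto
        have "d u v < F u / 2" using eta s v_def by auto
        then have "2 * d u v < F u" by linarith
        moreover have "d p u \<le> d p v + d v u" "d v x \<le> d v u + d u x"
          using tri uT vT pT xT by auto
        ultimately have "0 < F v" unfolding F_def using M.commute[of u v] by linarith
        then show "(0 < F (g s)) = (0 < F (g t))" using True u_def v_def by simp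
      qed
    next
      case False
      have "d p u \<noteq> 0" using M.zero[OF pT uT] up by auto
      then have dpu: "d p u > 0" using M.nonneg[of p u] by linarith
      obtain \<eta> where eta: "\<eta> > 0" "\<forall>s\<in>{a..b}. \<bar>s - t\<bar> < \<eta> \<longrightarrow> d u (g s) < d p u"
        using gc t dpu u_def that by blast
      show ?thesis
      proof (intro exI conjI ballI impI)
        show "\<eta> > 0" by fact
        fix s assume s: "s \<in> {a..b}" "\<bar>s - t\<bar> < \<eta>"
        define v where "v = g s"
        have vT: "v \<in> T" using gT s v_def by auto
        have duv: "d u v < d p u" using eta s v_def by auto
        have f4: "d u x + d v p \<le> max (d u v + d x p) (d u p + d x v)"
          using fp uT xT vT pT unfolding fourpt_def by blast
        have "\<not> 0 < F v"
          using f4 duv False M.nonneg[of v p] M.commute[of v p] M.commute[of u p] M.commute[of x p] M.commute[of x v]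
          unfolding F_def by (smt (verit))
        then show "(0 < F (g s)) = (0 < F (g t))" using False u_def v_def by simp
      qed
    qed
  qed
  moreover have "0 < F (g a)" using gx xT pT xp M.zero[OF pT xT] M.nonneg[of p x] M.zero[OF xT xT]
    unfolding F_def by auto
  moreover have "\<not> 0 < F (g b)" using gy pI M.commute[of y x] M.commute[of p y] M.commute[of p x] unfolding F_def by simp
  ultimately show False by blast
qed


lemma arc_in:
  assumes MS: "Metric_space T d" and fp: "fourpt T d"
    and geo: "\<forall>x\<in>T. \<forall>y\<in>T. \<exists>S. geodesic_seg T d S x y"
    and p: "pathin (Metric_space.mtopology T d) g" and inj: "inj_on g {0..1}"
    and g0: "g 0 = x" and g1: "g 1 = y" and s: "s \<in> {0..1}"
  shows "d x (g s) + d (g s) y = d x y"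
proof (rule ccontr)
  assume ne: "d x (g s) + d (g s) y \<noteq> d x y"
  interpret M: Metric_space T d by (rule MS)
  note gT = pathin_metric(1)[OF MS p] and gc = pathin_metric(2)[OF MS p]
  define q where "q = g s"
  have qT: "q \<in> T" using gT s q_def by auto
  have xT: "x \<in> T" using gT g0 by auto
  have yT: "y \<in> T" using gT g1 by auto
  have gt: "d x q + d q y > d x y" using ne M.triangle[OF xT qT yT] unfolding q_def by linarith
  define t0 where "t0 = (d q x + d q y - d x y)/2"
  have t02: "2 * t0 = d q x + d q y - d x y" by (simp add: t0_def)
  have t0pos: "t0 > 0" using t02 gt M.commute[of x q] by linarith
  have t0le: "t0 \<le> d q x" using t02 M.triangle[OF qT xT yT] by linarith
  obtain S where "geodesic_seg T d S q x" using geo qT xT by blast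
  then obtain \<gamma> where ga: "\<gamma> 0 = q" "\<gamma> (d q x) = x" "\<gamma> ` {0..d q x} \<subseteq> T"
      "\<forall>s\<in>{0..d q x}. \<forall>t\<in>{0..d q x}. d (\<gamma> s) (\<gamma> t) = \<bar>s - t\<bar>"
    unfolding geodesic_seg_def by blast
  define pp where "pp = \<gamma> t0"
  have t0in: "t0 \<in> {0..d q x}" using t0pos t0le by auto
  have ppT: "pp \<in> T" using ga(3) t0in pp_def by auto
  have dqp: "d q pp = t0"
  proof -
    have "0 \<in> {0..d q x}" by simp
    then have "d (\<gamma> 0) (\<gamma> t0) = \<bar>0 - t0\<bar>" using ga(4) t0in by blast
    then show ?thesis using ga(1) pp_def t0pos by simp
  qed
  have dpx: "d pp x = d q x - t0"
  proof -
    have "d q x \<in> {0..d q x}" by simp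
    then have "d (\<gamma> t0) (\<gamma> (d q x)) = \<bar>t0 - d q x\<bar>" using ga(4) t0in by blast
    then show ?thesis using ga(2) pp_def t0le by simp
  qed
  have f4: "d pp y + d q x \<le> max (d pp q + d y x) (d pp x + d y q)"
    using fp ppT yT qT xT unfolding fourpt_def by blast
  have tr: "d q y \<le> d q pp + d pp y" using M.triangle[OF qT ppT yT] .
  have I1: "d q pp + d pp y = d q y"
    using f4 tr dqp dpx t02 M.commute[of pp q] M.commute[of y x] M.commute[of y q] M.commute[of x y]
    by (smt (verit))
  have I2: "d x pp + d pp q = d x q"
    using dqp dpx M.commute[of pp q] M.commute[of x pp] M.commute[of x q] by simp
  have s1: "0 \<le> s" "s \<le> 1" using s by auto
  have "\<exists>t\<in>{0..s}. g t = pp"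
  proof (rule passes[OF MS fp s1(1), of g x q])
    show "\<forall>t\<in>{0..s}. g t \<in> T" using gT s1 by auto
    show "\<forall>t\<in>{0..s}. \<forall>e>0. \<exists>\<eta>>0. \<forall>s'\<in>{0..s}. \<bar>s' - t\<bar> < \<eta> \<longrightarrow> d (g t) (g s') < e"
      using gc s1 by (meson atLeastAtMost_iff order_trans)
  qed (use g0 q_def ppT I2 in auto)
  then obtain t1 where t1: "t1 \<in> {0..s}" "g t1 = pp" by blast
  have "\<exists>t\<in>{s..1}. g t = pp"
  proof (rule passes[OF MS fp s1(2), of g q y])
    show "\<forall>t\<in>{s..1}. g t \<in> T" using gT s1 by auto
    show "\<forall>t\<in>{s..1}. \<forall>e>0. \<exists>\<eta>>0. \<forall>s'\<in>{s..1}. \<bar>s' - t\<bar> < \<eta> \<longrightarrow> d (g t) (g s') < e"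
      using gc s1 by (meson atLeastAtMost_iff order_trans)
  qed (use g1 q_def ppT I1 in auto)
  then obtain t2 where t2: "t2 \<in> {s..1}" "g t2 = pp" by blast
  have "t1 = t2" using inj t1 t2 s1 unfolding inj_on_def by auto
  then have "t1 = s" using t1 t2 by auto
  then have "pp = q" using t1 q_def by simp
  then show False using dqp t0pos M.zero[OF qT qT] by simp
qed


lemma geo_arc:
  assumes MS: "Metric_space T d" and G: "geodesic_seg T d S x y" and xy: "x \<noteq> y"
  shows "\<exists>g. pathin (Metric_space.mtopology T d) g \<and> inj_on g {0..1} \<and> g 0 = x \<and> g 1 = y \<and> S = g ` {0..1}"
proof -
  interpret M: Metric_space T d by (rule MS)
  obtain \<gamma> where ga: "\<gamma> 0 = x" "\<gamma> (d x y) = y" "\<gamma> ` {0..d x y} \<subseteq> T"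
      "\<forall>s\<in>{0..d x y}. \<forall>t\<in>{0..d x y}. d (\<gamma> s) (\<gamma> t) = \<bar>s - t\<bar>" "S = \<gamma> ` {0..d x y}"
    using G unfolding geodesic_seg_def by blast
  define D where "D = d x y"
  have "0 \<in> {0..D}" "D \<in> {0..D}" using M.nonneg[of x y] D_def by auto
  then have "\<gamma> 0 \<in> T" "\<gamma> D \<in> T" using ga(3) D_def by blast+
  then have xT: "x \<in> T" and yT: "y \<in> T" using ga(1,2) D_def by simp_all
  have "d x y \<noteq> 0" using M.zero[OF xT yT] xy by auto
  then have Dpos: "D > 0" using M.nonneg[of x y] D_def by linarith
  define h where "h t = \<gamma> (D*t)" for t
  have Din: "D*t \<in> {0..D}" if "t \<in> {0..1}" for t using that Dpos by (auto simp: mult_left_le)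
  have hT: "h t \<in> T" if "t \<in> {0..1}" for t using Din[OF that] ga(3) h_def D_def by auto
  have hiso: "d (h s) (h t) = D * \<bar>s - t\<bar>" if "s \<in> {0..1}" "t \<in> {0..1}" for s t
  proof -
    have "d (h s) (h t) = \<bar>D * s - D*t\<bar>" using ga(4) Din[OF that(1)] Din[OF that(2)] h_def D_def by auto
    also have "\<dots> = D * \<bar>s - t\<bar>" using Dpos by (simp add: abs_mult right_diff_distrib[symmetric])
    finally show ?thesis .
  qed
  have pin: "pathin (Metric_space.mtopology T d) h"
    unfolding pathin_def M.continuous_map_to_metric
  proof (intro ballI allI impI)
    fix t e assume t: "t \<in> topspace (top_of_set {0..1::real})" and e: "(0::real) < e"
    then have t01: "t \<in> {0..1}" by simp
    show "\<exists>U. openin (top_of_set {0..1}) U \<and> t \<in> U \<and> (\<forall>y\<in>U. h y \<in> M.mball (h t) e)"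
    proof (intro exI conjI ballI)
      show "openin (top_of_set {0..1}) ({0..1} \<inter> ball t (e/D))" by (rule openin_open_Int) simp
      show "t \<in> {0..1} \<inter> ball t (e/D)" using t01 e Dpos by simp
      fix s assume s: "s \<in> {0..1} \<inter> ball t (e/D)"
      then have "\<bar>t - s\<bar> < e/D" by (simp add: dist_real_def)
      then have "D * \<bar>t - s\<bar> < e" using Dpos by (simp add: field_simps)
      then show "h s \<in> M.mball (h t) e" using hiso[OF t01, of s] s hT t01 by auto
    qed
  qed
  have inj: "inj_on h {0..1}"
  proof (rule inj_onI)
    fix s t assume s: "s \<in> {0..1}" and t: "t \<in> {0..1}" and eq: "h s = h t"
    then have "d (h s) (h t) = 0" using M.zero[OF hT[OF s] hT[OF t]] by simp
    then show "s = t" using hiso[OF s t] Dpos by simp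
  qed
  have img: "h ` {0..1} = \<gamma> ` {0..D}"
  proof -
    have "h ` {0..1} = \<gamma> ` ((*) D ` {0..1})" unfolding h_def by (simp add: image_image)
    also have "(*) D ` {0..1} = {0..D}" using Dpos by simp
    finally show ?thesis .
  qed
  show ?thesis
    using pin inj img ga(1,2,5) D_def h_def by (intro exI[of _ h]) auto
qed

lemma rtree_crit:
  assumes MS: "Metric_space T d" and fp: "fourpt T d"
    and geo: "\<forall>x\<in>T. \<forall>y\<in>T. \<exists>S. geodesic_seg T d S x y"
  shows "R_tree T d"
  unfolding R_tree_def
proof (intro conjI ballI impI allI)
  show "Metric_space T d" by fact
  fix x y assume xT: "x \<in> T" and yT: "y \<in> T" and xy: "x \<noteq> y"
  define I where "I = {p\<in>T. d x p + d p y = d x y}"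
  have arcI: "A = I" if ex: "\<exists>g. pathin (Metric_space.mtopology T d) g \<and> inj_on g {0..1} \<and> g 0 = x \<and> g 1 = y \<and> A = g ` {0..1}" for A
  proof -
    obtain g where g: "pathin (Metric_space.mtopology T d) g" "inj_on g {0..1}" "g 0 = x" "g 1 = y" "A = g ` {0..1}"
      using ex by blast
    note gT = pathin_metric(1)[OF MS g(1)] and gc = pathin_metric(2)[OF MS g(1)]
    show "A = I"
    proof
      show "A \<subseteq> I" using arc_in[OF MS fp geo g(1,2,3,4)] gT g(5) unfolding I_def by auto
      show "I \<subseteq> A"
      proof
        fix p assume "p \<in> I"
        then have "p \<in> T" "d x p + d p y = d x y" unfolding I_def by auto
        then have "\<exists>t\<in>{0..1}. g t = p"
          using passes[OF MS fp _ gT gc g(3,4)] by simp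
        then show "p \<in> A" using g(5) by auto
      qed
    qed
  qed
  obtain S where S: "geodesic_seg T d S x y" using geo xT yT by blast
  have SI: "S = I" using arcI geo_arc[OF MS S xy] by blast
  show "\<exists>!A. \<exists>g. pathin (Metric_space.mtopology T d) g \<and> inj_on g {0..1} \<and> g 0 = x \<and> g 1 = y \<and> A = g ` {0..1}"
    using geo_arc[OF MS S xy] arcI by blast
  fix A assume "\<exists>g. pathin (Metric_space.mtopology T d) g \<and> inj_on g {0..1} \<and> g 0 = x \<and> g 1 = y \<and> A = g ` {0..1}"
  then have "A = S" using arcI SI by blast
  then show "geodesic_seg T d A x y" using S by simp
qed



lemma ultra4:
  fixes m :: "'b \<Rightarrow> 'b \<Rightarrow> real"
  assumes ul: "\<And>u v w. min (m u v) (m v w) \<le> m u w" and sy: "\<And>u v. m u v = m v u"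
  shows "min (m x z + m y w) (m x w + m y z) \<le> m x y + m z w"
proof -
  have "min (m x z) (m z y) \<le> m x y" "min (m x w) (m w y) \<le> m x y"
       "min (m z x) (m x w) \<le> m z w" "min (m z y) (m y w) \<le> m z w"
       "min (m x y) (m y z) \<le> m x z" "min (m x w) (m w z) \<le> m x z"
       "min (m y x) (m x w) \<le> m y w" "min (m y z) (m z w) \<le> m y w"
       "min (m x y) (m y w) \<le> m x w" "min (m x z) (m z w) \<le> m x w"
       "min (m y x) (m x z) \<le> m y z" "min (m y w) (m w z) \<le> m y z"
    using ul by blast+
  moreover have "m z y = m y z" "m w y = m y w" "m z x = m x z" "m w z = m z w" "m y x = m x y"
    using sy by blast+
  ultimately show ?thesis by (smt (verit))
qed

lemma cross:
  fixes m :: "'b \<Rightarrow> 'b \<Rightarrow> real"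
  assumes ul: "\<And>a b c. min (m a b) (m b c) \<le> m a c" and sy: "\<And>a b. m a b = m b a"
    and le: "\<And>a b. m a b \<le> N a"
    and h: "m pa pb = \<sigma>" "m pc pd = \<tau>" "\<mu> = m pa pc" "\<mu> \<le> \<sigma>" "\<mu> \<le> \<tau>" "N pb = \<sigma>" "N pd = \<tau>"
  shows "m pb pd = \<mu>"
proof -
  have "min (m pa pc) (m pc pd) \<le> m pa pd" "min (m pb pa) (m pa pd) \<le> m pb pd"
    "min (m pa pb) (m pb pc) \<le> m pa pc" "min (m pb pd) (m pd pc) \<le> m pb pc" using ul by blast+
  moreover have "m pb pa = m pa pb" "m pd pc = m pc pd" "m pd pb = m pb pd" using sy by blast+
  moreover have "m pb pd \<le> N pb" "m pd pb \<le> N pd" using le by blast+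
  ultimately show ?thesis using h by (smt (verit))
qed



theorem proposition5p1:
  fixes \<delta> \<Delta> :: real and x0 :: "'a::metric_space" and Z :: "'a set"
    and G :: "'a \<Rightarrow> 'a set" and q :: "'a \<Rightarrow> 'v" and V :: "'v set" and E :: "'v \<Rightarrow> 'v \<Rightarrow> bool"
  assumes geod: "geodesic_space TYPE('a)"
    and qtree: "quasi_isometry_to_tree q V E"
    and hyp: "hyperbolic \<delta> TYPE('a)"
    and bneck: "bottleneck_constant \<Delta> TYPE('a)"
    and segs: "\<forall>z\<in>Z. geodesic_segment (G z) x0 z"
  shows "\<exists>(T :: 'a set) (dT :: 'a \<Rightarrow> 'a \<Rightarrow> real) (f :: 'a \<Rightarrow> 'a).
           R_tree T dT \<and> f ` (\<Union>z\<in>Z. G z) \<subseteq> T \<and>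
           (\<forall>z\<in>Z. \<forall>x\<in>G z. \<forall>y\<in>G z. dT (f x) (f y) = dist x y) \<and>
           (\<forall>x\<in>(\<Union>z\<in>Z. G z). \<forall>y\<in>(\<Union>z\<in>Z. G z).
              dist x y - 2 * (\<Delta> + 2 * \<delta>) \<le> dT (f x) (f y) \<and> dT (f x) (f y) \<le> dist x y)"
proof -
  define m where "m = mm x0"
  define N where "N u = dist x0 u" for u
  define dS where "dS u v = N u + N v - 2 * m u v" for u v
  define Y where "Y = (\<Union>z\<in>Z. G z)"
  have ul: "\<And>u v w. min (m u v) (m v w) \<le> m u w" unfolding m_def by (rule mm_ultra[OF geod])
  have sy: "\<And>u v. m u v = m v u" unfolding m_def by (rule mm_sym)
  have le1: "\<And>u v. m u v \<le> N u" unfolding m_def N_def by (rule mm_props(4)[OF geod])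
  have le2: "\<And>u v. m u v \<le> N v" unfolding m_def N_def by (rule mm_props(5)[OF geod])
  have ge: "\<And>u v. N u + N v - dist u v \<le> 2 * m u v" unfolding m_def N_def by (rule mm_ge2[OF geod])
  have bd: "\<And>u v. 2 * m u v \<le> N u + N v - dist u v + 2*\<Delta> + 4*\<delta>"
    unfolding m_def N_def by (rule mm_bound[OF geod hyp bneck])
  have dS_nn: "0 \<le> dS u v" for u v using le1[of u v] le2[of u v] unfolding dS_def by linarith
  have dS_sym: "dS u v = dS v u" for u v using sy[of u v] unfolding dS_def by simp
  have dS_tri: "dS u w \<le> dS u v + dS v w" for u v w
    using ul[of u v w] le2[of u v] le1[of v w] unfolding dS_def min_def by (auto split: if_splits)
  have dS_self: "dS u u = 0" for u using ge[of u u] le1[of u u] unfolding dS_def by simp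
  have dS_cong: "dS a b = dS a' b" if "dS a a' = 0" for a a' b
    using dS_tri[of a b a'] dS_tri[of a' b a] dS_sym[of a a'] that by linarith
  have coll: "dS u v = dist u v \<and> m u v = min (N u) (N v)" if "dist u v = \<bar>N u - N v\<bar>" for u v
    using ge[of u v] le1[of u v] le2[of u v] that unfolding dS_def min_def by (auto split: if_splits)
  define rep where "rep u = (SOME w. w \<in> Y \<and> dS u w = 0)" for u
  have repa: "rep u \<in> Y \<and> dS u (rep u) = 0" if "u \<in> Y" for u
    using someI[of "\<lambda>w. w \<in> Y \<and> dS u w = 0" u] that dS_self unfolding rep_def by blast
  have rep_eq: "rep u = rep v" if "dS u v = 0" for u v
  proof -
    have "\<And>b. dS u b = dS v b" using dS_cong that by blast
    then show ?thesis unfolding rep_def by simp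
  qed
  define T where "T = rep ` Y"
  have repT: "rep x = x" if xT: "x \<in> T" for x
  proof -
    obtain a where a: "a \<in> Y" "x = rep a" using xT T_def by blast
    then show ?thesis using rep_eq[of a "rep a"] repa[OF a(1)] by simp
  qed
  have TY: "T \<subseteq> Y" using repa T_def by auto
  have dS_rep: "dS (rep u) (rep v) = dS u v" if "u \<in> Y" "v \<in> Y" for u v
  proof -
    have "dS (rep u) (rep v) = dS u (rep v)" using dS_cong[of "rep u" u] repa[OF that(1)] dS_sym by metis
    also have "\<dots> = dS (rep v) u" using dS_sym by metis
    also have "\<dots> = dS v u" using dS_cong[of "rep v" v] repa[OF that(2)] dS_sym by metis
    finally show ?thesis using dS_sym by metis
  qed
  have MS: "Metric_space T dS"
  proof
    show "0 \<le> dS x y" for x y by (rule dS_nn)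
    show "dS x y = dS y x" for x y by (rule dS_sym)
    show "dS x z \<le> dS x y + dS y z" for x y z by (rule dS_tri)
    show "(dS x y = 0) = (x = y)" if "x \<in> T" "y \<in> T" for x y
      using rep_eq[of x y] repT[OF that(1)] repT[OF that(2)] dS_self by auto
  qed
  have FP: "fourpt T dS"
    unfolding fourpt_def
  proof (intro ballI)
    fix x y z w
    have "min (m x z + m y w) (m x w + m y z) \<le> m x y + m z w" by (rule ultra4[OF ul sy])
    then show "dS x y + dS z w \<le> max (dS x z + dS y w) (dS x w + dS y z)"
      unfolding dS_def min_def max_def by (auto split: if_splits)
  qed
  have geoT: "\<forall>x\<in>T. \<forall>y\<in>T. \<exists>S. geodesic_seg T dS S x y"
  proof (intro ballI)
    fix x y assume xT: "x \<in> T" and yT: "y \<in> T"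
    then have "x \<in> Y" "y \<in> Y" using TY by auto
    then obtain z w where z: "z \<in> Z" "x \<in> G z" and w: "w \<in> Z" "y \<in> G w" unfolding Y_def by blast
    obtain gz where gz: "gz 0 = x0" "gz (dist x0 z) = z"
      "\<forall>s\<in>{0..dist x0 z}. \<forall>t\<in>{0..dist x0 z}. dist (gz s) (gz t) = \<bar>s - t\<bar>"
      "G z = gz ` {0..dist x0 z}" "\<forall>s\<in>{0..dist x0 z}. dist x0 (gz s) = s"
      using seg_param segs z(1) by blast
    obtain gw where gw: "gw 0 = x0" "gw (dist x0 w) = w"
      "\<forall>s\<in>{0..dist x0 w}. \<forall>t\<in>{0..dist x0 w}. dist (gw s) (gw t) = \<bar>s - t\<bar>"
      "G w = gw ` {0..dist x0 w}" "\<forall>s\<in>{0..dist x0 w}. dist x0 (gw s) = s"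
      using seg_param segs w(1) by blast
    define Lz where "Lz = dist x0 z"
    define Lw where "Lw = dist x0 w"
    define a where "a = N x"
    define b where "b = N y"
    obtain a0 where a0: "a0 \<in> {0..Lz}" "x = gz a0" using z(2) gz(4) Lz_def by blast
    have aa0: "a = a0" using a0 gz(5) a_def N_def Lz_def by simp
    obtain b0 where b0: "b0 \<in> {0..Lw}" "y = gw b0" using w(2) gw(4) Lw_def by blast
    have bb0: "b = b0" using b0 gw(5) b_def N_def Lw_def by simp
    have xa: "x = gz a" "a \<in> {0..Lz}" using a0 aa0 by auto
    have yb: "y = gw b" "b \<in> {0..Lw}" using b0 bb0 by auto
    define \<mu> where "\<mu> = m x y"
    have mua: "\<mu> \<le> a" using le1[of x y] \<mu>_def a_def by simp
    have mub: "\<mu> \<le> b" using le2[of x y] \<mu>_def b_def by simp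
    have mu0: "0 \<le> \<mu>"
    proof -
      have "dist x y \<le> N x + N y" unfolding N_def by (metis dist_commute dist_triangle)
      then show ?thesis using ge[of x y] \<mu>_def by linarith
    qed
    have levz: "N (gz s) = s" if "s \<in> {0..Lz}" for s using gz(5) that N_def Lz_def by simp
    have levw: "N (gw s) = s" if "s \<in> {0..Lw}" for s using gw(5) that N_def Lw_def by simp
    have collz: "dS (gz s) (gz t) = \<bar>s - t\<bar> \<and> m (gz s) (gz t) = min s t" if "s \<in> {0..Lz}" "t \<in> {0..Lz}" for s t
    proof -
      have "dist (gz s) (gz t) = \<bar>N (gz s) - N (gz t)\<bar>" using gz(3) that levz Lz_def by simp
      then show ?thesis using coll levz that gz(3) Lz_def by simp
    qed
    have collw: "dS (gw s) (gw t) = \<bar>s - t\<bar> \<and> m (gw s) (gw t) = min s t" if "s \<in> {0..Lw}" "t \<in> {0..Lw}" for s t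
    proof -
      have "dist (gw s) (gw t) = \<bar>N (gw s) - N (gw t)\<bar>" using gw(3) that levw Lw_def by simp
      then show ?thesis using coll levw that gw(3) Lw_def by simp
    qed
    have crs: "dS (gz \<sigma>) (gw \<tau>) = \<sigma> + \<tau> - 2 * \<mu>" if s: "\<sigma> \<in> {\<mu>..a}" and t: "\<tau> \<in> {\<mu>..b}" for \<sigma> \<tau>
    proof -
      have sL: "\<sigma> \<in> {0..Lz}" using s xa mu0 by auto
      have tL: "\<tau> \<in> {0..Lw}" using t yb mu0 by auto
      have "m x (gz \<sigma>) = \<sigma>" using collz[OF xa(2) sL] xa s by auto
      moreover have "m y (gw \<tau>) = \<tau>" using collw[OF yb(2) tL] yb t by auto
      ultimately have "m (gz \<sigma>) (gw \<tau>) = \<mu>"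
        using cross[where m=m and N=N and pa=x and pb="gz \<sigma>" and \<sigma>=\<sigma> and pc=y and pd="gw \<tau>" and \<tau>=\<tau> and \<mu>=\<mu>, OF ul sy le1] \<mu>_def s t levz[OF sL] levw[OF tL] by auto
      then show ?thesis unfolding dS_def using levz[OF sL] levw[OF tL] by simp
    qed
    define D where "D = a + b - 2 * \<mu>"
    have DdS: "dS x y = D" unfolding D_def dS_def a_def b_def \<mu>_def by simp
    define pre where "pre t = (if t \<le> a - \<mu> then gz (a - t) else gw (t - a + 2 * \<mu>))" for t
    have preY: "pre t \<in> Y" if "t \<in> {0..D}" for t
    proof (cases "t \<le> a - \<mu>")
      case True
      then have "a - t \<in> {0..Lz}" using that xa mu0 by auto
      then have "pre t \<in> G z" using True gz(4) pre_def Lz_def by auto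
      then show ?thesis using z(1) Y_def by auto
    next
      case False
      then have "t - a + 2 * \<mu> \<in> {0..Lw}" using that yb mu0 D_def by auto
      then have "pre t \<in> G w" using False gw(4) pre_def Lw_def by auto
      then show ?thesis using w(1) Y_def by auto
    qed
    have dpre1: "dS (pre s) (pre t) = \<bar>s - t\<bar>" if st: "s \<in> {0..D}" "t \<in> {0..D}" "s \<le> t" for s t
    proof (cases "t \<le> a - \<mu>")
      case True
      then have "s \<le> a - \<mu>" using st by auto
      moreover have "a - s \<in> {0..Lz}" "a - t \<in> {0..Lz}" using st True xa mu0 by auto
      ultimately show ?thesis using collz True pre_def by auto
    next
      case tF: False
      show ?thesis
      proof (cases "s \<le> a - \<mu>")
        case True
        have "dS (pre s) (pre t) = dS (gz (a - s)) (gw (t - a + 2 * \<mu>))" using True tF pre_def by simp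
        also have "\<dots> = (a - s) + (t - a + 2 * \<mu>) - 2 * \<mu>"
          by (rule crs) (use st True tF D_def in auto)
        finally show ?thesis using st by simp
      next
        case False
        have "t - a + 2 * \<mu> \<in> {0..Lw}" "s - a + 2 * \<mu> \<in> {0..Lw}" using st tF False yb mu0 D_def by auto
        then show ?thesis using collw False tF pre_def by auto
      qed
    qed
    have dpre: "dS (pre s) (pre t) = \<bar>s - t\<bar>" if st: "s \<in> {0..D}" "t \<in> {0..D}" for s t
    proof (cases "s \<le> t")
      case True then show ?thesis using dpre1 st by blast
    next
      case False then show ?thesis using dpre1[of t s] st dS_sym by (simp add: abs_minus_commute)
    qed
    have pre0: "pre 0 = x" using pre_def mua xa by simp
    have preD: "dS (pre D) y = 0"
    proof (cases "D \<le> a - \<mu>")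
      case True
      then have bm: "b = \<mu>" using D_def mub by simp
      have "pre D = gz \<mu>" using True pre_def D_def bm by simp
      moreover have "dS (gz \<mu>) (gw b) = \<mu> + b - 2 * \<mu>" by (rule crs) (use mua mub in auto)
      ultimately show ?thesis using bm yb by simp
    next
      case False
      then have "pre D = gw b" using pre_def D_def by simp
      then show ?thesis using yb dS_self by simp
    qed
    define h where "h t = rep (pre t)" for t
    show "\<exists>S. geodesic_seg T dS S x y"
      unfolding geodesic_seg_def
    proof (intro exI conjI)
      show "h 0 = x" using h_def pre0 repT[OF xT] by simp
      show "h (dS x y) = y" using h_def DdS rep_eq[OF preD] repT[OF yT] by simp
      show "h ` {0..dS x y} \<subseteq> T" using h_def preY DdS T_def by auto
      show "\<forall>s\<in>{0..dS x y}. \<forall>t\<in>{0..dS x y}. dS (h s) (h t) = \<bar>s - t\<bar>"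
        using h_def dS_rep preY dpre DdS by simp
    qed simp
  qed
  have RT: "R_tree T dS" by (rule rtree_crit[OF MS FP geoT])
  have seg_coll: "dS x y = dist x y" if zZ: "z \<in> Z" and xG: "x \<in> G z" and yG: "y \<in> G z" for x y z
  proof -
    obtain \<gamma> where g: "\<gamma> 0 = x0" "\<gamma> (dist x0 z) = z"
      "\<forall>s\<in>{0..dist x0 z}. \<forall>t\<in>{0..dist x0 z}. dist (\<gamma> s) (\<gamma> t) = \<bar>s - t\<bar>"
      "G z = \<gamma> ` {0..dist x0 z}" "\<forall>s\<in>{0..dist x0 z}. dist x0 (\<gamma> s) = s"
      using seg_param segs zZ by blast
    obtain s t where "s \<in> {0..dist x0 z}" "t \<in> {0..dist x0 z}" "x = \<gamma> s" "y = \<gamma> t"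
      using xG yG g(4) by blast
    then have "dist x y = \<bar>N x - N y\<bar>" using g(3,5) N_def by simp
    then show ?thesis using coll by blast
  qed
  show ?thesis
  proof (intro exI conjI ballI)
    show "R_tree T dS" by fact
    show "rep ` (\<Union>z\<in>Z. G z) \<subseteq> T" using T_def Y_def by simp
    fix z x y assume z: "z \<in> Z" and x: "x \<in> G z" and y: "y \<in> G z"
    have "x \<in> Y" "y \<in> Y" using z x y Y_def by auto
    then show "dS (rep x) (rep y) = dist x y" using dS_rep seg_coll[OF z x y] by simp
  next
    fix x y assume x: "x \<in> (\<Union>z\<in>Z. G z)" and y: "y \<in> (\<Union>z\<in>Z. G z)"
    then have e: "dS (rep x) (rep y) = dS x y" using dS_rep Y_def by simp
    show "dist x y - 2 * (\<Delta> + 2 * \<delta>) \<le> dS (rep x) (rep y)"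
      using bd[of x y] e unfolding dS_def by (simp add: algebra_simps)
    show "dS (rep x) (rep y) \<le> dist x y"
      using ge[of x y] e unfolding dS_def by linarith
  qed
qed

end
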